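(* For each $n\in\mathbb{N}$ let $A_n\subseteq\mathcal{R}$ be L-measurable, with $\lim_{n\to\infty}M(A_n)=0$, and let $X\subseteq\mathcal{R}$ be outer measurable. Then $X\cap\bigcup_{n=1}^\infty A_n$ is outer measurable, the limit $\lim_{N\to\infty}M_u\big(X\cap\bigcup_{n=1}^N A_n\big)$ exists in $\mathcal{R}$, and $$\lim_{N\to\infty}M_u\Big(X\cap\bigcup_{n=1}^N A_n\Big)=M_u\Big(X\cap\bigcup_{n=1}^\infty A_n\Big).$$
   Context: $\mathcal{R}$ denotes the Levi-Civita field: functions $x:\mathbb{Q}\to\mathbb{R}$ with left-finite support, with componentwise addition and formal power series multiplication, ordered by $x>0$ iff $x\ne0$ and $x[\min\operatorname{supp}x]>0$; it is a non-Archimedean ordered field extension of $\mathbb{R}$, Cauchy complete in the order topology, in which all limits and series are taken (a series $\sum a_n$ converges iff $a_n\to0$). An interval is a set $[a,b],[a,b),(a,b]$ or $(a,b)$ with $a<b$ in $\mathcal{R}$, of length $l=b-a$. A cover of $A\subseteq\mathcal{R}$ is a sequence of intervals $(S_n)_{n\ge1}$ with $A\subseteq\bigcup_n S_n$ and $\sum_n l(S_n)$ convergent in $\mathcal{R}$. $A$ is called outer measurable if the infimum $\inf\{\sum_n l(S_n): (S_n)\text{ a cover of }A\}$ exists in $\mathcal{R}$; this infimum is then called the outer measure $M_u(A)$. An outer measurable set $A\subseteq\mathcal{R}$ is L-measurable if for every outer measurable $B\subseteq\mathcal{R}$ both $A\cap B$ and $A^c\cap B$ (where $A^c=\mathcal{R}\setminus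 A$) are outer measurable and $M_u(B)=M_u(A\cap B)+M_u(A^c\cap B)$; then its L-measure is $M(A):=M_u(A)$. *)

theory Defs
  imports Complex_Main
begin

section \<open>The Levi-Civita field\<close>

typedef lc = "{x :: rat \<Rightarrow> real. \<forall>q. finite {p. p \<le> q \<and> x p \<noteq> 0}}"
  by (rule exI[of _ "\<lambda>_. 0"]) simp

setup_lifting type_definition_lc

instantiation lc :: "{zero, one, plus, uminus, minus, times, ord}"
begin

definition zero_lc :: lc where "zero_lc = Abs_lc (\<lambda>_. 0)"
definition one_lc :: lc where "one_lc = Abs_lc (\<lambda>q. if q = 0 then 1 else 0)"
definition plus_lc :: "lc \<Rightarrow> lc \<Rightarrow> lc" where
  "plus_lc x y = Abs_lc (\<lambda>q. Rep_lc x q + Rep_lc y q)"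
definition uminus_lc :: "lc \<Rightarrow> lc" where
  "uminus_lc x = Abs_lc (\<lambda>q. - Rep_lc x q)"
definition minus_lc :: "lc \<Rightarrow> lc \<Rightarrow> lc" where
  "minus_lc x y = Abs_lc (\<lambda>q. Rep_lc x q - Rep_lc y q)"
text \<open>Formal power series (Cauchy) product; the sum is finite by left-finiteness.\<close>
definition times_lc :: "lc \<Rightarrow> lc \<Rightarrow> lc" where
  "times_lc x y = Abs_lc (\<lambda>q. \<Sum>pr\<in>{(p, r). p + r = q \<and> Rep_lc x p \<noteq> 0 \<and> Rep_lc y r \<noteq> 0}.
                                    Rep_lc x (fst pr) * Rep_lc y (snd pr))"

definition lc_pos :: "lc \<Rightarrow> bool" where
  "lc_pos x \<longleftrightarrow> (\<exists>q. 0 < Rep_lc x q \<and> (\<forall>p<q. Rep_lc x p = 0))"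

definition less_lc :: "lc \<Rightarrow> lc \<Rightarrow> bool" where
  "less_lc x y \<longleftrightarrow> lc_pos (y - x)"
definition less_eq_lc :: "lc \<Rightarrow> lc \<Rightarrow> bool" where
  "less_eq_lc x y \<longleftrightarrow> x < y \<or> x = y"

instance ..
end

definition lc_tendsto :: "(nat \<Rightarrow> lc) \<Rightarrow> lc \<Rightarrow> bool" where
  "lc_tendsto X L \<longleftrightarrow> (\<forall>e::lc. 0 < e \<longrightarrow> (\<exists>N. \<forall>n\<ge>N. L - e < X n \<and> X n < L + e))"

primrec lc_psum :: "(nat \<Rightarrow> lc) \<Rightarrow> nat \<Rightarrow> lc" where
  "lc_psum f 0 = 0"
| "lc_psum f (Suc N) = lc_psum f N + f N"

definition lc_sums :: "(nat \<Rightarrow> lc) \<Rightarrow> lc \<Rightarrow> bool" where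
  "lc_sums f s \<longleftrightarrow> lc_tendsto (lc_psum f) s"

definition lc_interval :: "lc \<Rightarrow> lc \<Rightarrow> lc set \<Rightarrow> bool" where
  "lc_interval a b S \<longleftrightarrow> a < b \<and>
     (S = {a..b} \<or> S = {a..<b} \<or> S = {a<..b} \<or> S = {a<..<b})"

definition lc_cover :: "lc set \<Rightarrow> (nat \<Rightarrow> lc) \<Rightarrow> (nat \<Rightarrow> lc) \<Rightarrow> (nat \<Rightarrow> lc set) \<Rightarrow> bool" where
  "lc_cover A a b S \<longleftrightarrow> (\<forall>n. lc_interval (a n) (b n) (S n)) \<and> A \<subseteq> (\<Union>n. S n)
      \<and> (\<exists>s. lc_sums (\<lambda>n. b n - a n) s)"

definition cover_lengths :: "lc set \<Rightarrow> lc set" where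
  "cover_lengths A = {s. \<exists>a b S. lc_cover A a b S \<and> lc_sums (\<lambda>n. b n - a n) s}"

definition lc_is_inf :: "lc set \<Rightarrow> lc \<Rightarrow> bool" where
  "lc_is_inf T m \<longleftrightarrow> (\<forall>t\<in>T. m \<le> t) \<and> (\<forall>m'. (\<forall>t\<in>T. m' \<le> t) \<longrightarrow> m' \<le> m)"

definition outer_measurable :: "lc set \<Rightarrow> bool" where
  "outer_measurable A \<longleftrightarrow> (\<exists>m. lc_is_inf (cover_lengths A) m)"

definition Mu :: "lc set \<Rightarrow> lc" where
  "Mu A = (THE m. lc_is_inf (cover_lengths A) m)"

definition L_measurable :: "lc set \<Rightarrow> bool" where
  "L_measurable A \<longleftrightarrow> outer_measurable A \<and>
     (\<forall>B. outer_measurable B \<longrightarrow>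
        outer_measurable (A \<inter> B) \<and> outer_measurable (- A \<inter> B) \<and>
        Mu B = Mu (A \<inter> B) + Mu (- A \<inter> B))"

definition M :: "lc set \<Rightarrow> lc" where
  "M A = Mu A"

end

theory Submission
  imports Defs "HOL-Library.Nat_Bijection"
begin


lemma lc_mem: "Rep_lc x \<in> {x :: rat \<Rightarrow> real. \<forall>q. finite {p. p \<le> q \<and> x p \<noteq> 0}}"
  by (rule Rep_lc)

lemma lc_fin: "finite {p. p \<le> q \<and> Rep_lc x p \<noteq> 0}"
  using Rep_lc[of x] by auto

lemma Rep_zero: "Rep_lc 0 = (\<lambda>_. 0)"
  unfolding zero_lc_def by (rule Abs_lc_inverse) auto

lemma Rep_plus: "Rep_lc (x + y) = (\<lambda>q. Rep_lc x q + Rep_lc y q)"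
  unfolding plus_lc_def
proof (rule Abs_lc_inverse, safe)
  fix q
  have "{p. p \<le> q \<and> Rep_lc x p + Rep_lc y p \<noteq> 0} \<subseteq> {p. p \<le> q \<and> Rep_lc x p \<noteq> 0} \<union> {p. p \<le> q \<and> Rep_lc y p \<noteq> 0}"
    by auto
  then show "finite {p. p \<le> q \<and> Rep_lc x p + Rep_lc y p \<noteq> 0}"
    using lc_fin finite_subset by blast
qed

lemma Rep_uminus: "Rep_lc (- x) = (\<lambda>q. - Rep_lc x q)"
  unfolding uminus_lc_def
  by (rule Abs_lc_inverse) (simp add: lc_fin)

lemma Rep_minus: "Rep_lc (x - y) = (\<lambda>q. Rep_lc x q - Rep_lc y q)"
  unfolding minus_lc_def
proof (rule Abs_lc_inverse, safe)
  fix q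
  have "{p. p \<le> q \<and> Rep_lc x p - Rep_lc y p \<noteq> 0} \<subseteq> {p. p \<le> q \<and> Rep_lc x p \<noteq> 0} \<union> {p. p \<le> q \<and> Rep_lc y p \<noteq> 0}"
    by auto
  then show "finite {p. p \<le> q \<and> Rep_lc x p - Rep_lc y p \<noteq> 0}"
    using lc_fin finite_subset by blast
qed

lemma lc_eqI: "(\<And>q. Rep_lc x q = Rep_lc y q) \<Longrightarrow> x = y"
  using Rep_lc_inject by (metis ext)

instance lc :: ab_group_add
  by standard (auto intro!: lc_eqI simp: Rep_plus Rep_uminus Rep_minus Rep_zero)

lemma lead_ex:
  assumes "z \<noteq> (0::lc)"
  shows "\<exists>q. Rep_lc z q \<noteq> 0 \<and> (\<forall>p<q. Rep_lc z p = 0)"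
proof -
  obtain p0 where p0: "Rep_lc z p0 \<noteq> 0"
    using assms lc_eqI[of z 0] by (auto simp: Rep_zero)
  let ?F = "{p. p \<le> p0 \<and> Rep_lc z p \<noteq> 0}"
  have fin: "finite ?F" by (rule lc_fin)
  have ne: "?F \<noteq> {}" using p0 by auto
  let ?q = "Min ?F"
  have "?q \<in> ?F" using Min_in[OF fin ne] .
  moreover have "\<forall>p<?q. Rep_lc z p = 0"
  proof (intro allI impI)
    fix p assume "p < ?q"
    show "Rep_lc z p = 0"
    proof (rule ccontr)
      assume "Rep_lc z p \<noteq> 0"
      moreover have "p \<le> p0" using \<open>p < ?q\<close> \<open>?q \<in> ?F\<close> by auto
      ultimately have "p \<in> ?F" by auto
      then have "?q \<le> p" using Min_le[OF fin] by blast
      then show False using \<open>p < ?q\<close> by simp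
    qed
  qed
  ultimately show ?thesis by blast
qed

lemma pos_def: "lc_pos z \<longleftrightarrow> (\<exists>q. 0 < Rep_lc z q \<and> (\<forall>p<q. Rep_lc z p = 0))"
  by (simp add: lc_pos_def)

lemma pos_not_zero: "\<not> lc_pos 0"
  by (auto simp: lc_pos_def Rep_zero)

lemma pos_tri: "z = 0 \<or> lc_pos z \<or> lc_pos (- z)"
proof (cases "z = 0")
  case False
  then obtain q where q: "Rep_lc z q \<noteq> 0" "\<forall>p<q. Rep_lc z p = 0" using lead_ex by blast
  show ?thesis
  proof (cases "Rep_lc z q > 0")
    case True then show ?thesis using q by (auto simp: lc_pos_def)
  next
    case False
    then have "Rep_lc (-z) q > 0" using q by (auto simp: Rep_uminus)
    then show ?thesis using q by (auto simp: lc_pos_def Rep_uminus)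
  qed
qed simp

lemma pos_asym: "lc_pos z \<Longrightarrow> lc_pos (- z) \<Longrightarrow> False"
proof -
  assume a: "lc_pos z" "lc_pos (- z)"
  obtain q1 where q1: "0 < Rep_lc z q1" "\<forall>p<q1. Rep_lc z p = 0" using a(1) by (auto simp: lc_pos_def)
  obtain q2 where q2: "0 < - Rep_lc z q2" "\<forall>p<q2. - Rep_lc z p = 0" using a(2) by (auto simp: lc_pos_def Rep_uminus)
  show False
  proof (cases q1 q2 rule: linorder_cases)
    case less then show ?thesis using q1 q2 by force
  next
    case equal then show ?thesis using q1 q2 by force
  next
    case greater then show ?thesis using q1 q2 by force
  qed
qed

lemma pos_add: "lc_pos a \<Longrightarrow> lc_pos b \<Longrightarrow> lc_pos (a + b)"
proof -
  assume a: "lc_pos a" "lc_pos b"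
  obtain q1 where q1: "0 < Rep_lc a q1" "\<forall>p<q1. Rep_lc a p = 0" using a(1) by (auto simp: lc_pos_def)
  obtain q2 where q2: "0 < Rep_lc b q2" "\<forall>p<q2. Rep_lc b p = 0" using a(2) by (auto simp: lc_pos_def)
  show ?thesis
  proof (cases q1 q2 rule: linorder_cases)
    case less
    then show ?thesis using q1 q2 unfolding lc_pos_def Rep_plus
      by (intro exI[of _ q1]) auto
  next
    case equal
    then show ?thesis using q1 q2 unfolding lc_pos_def Rep_plus
      by (intro exI[of _ q1]) auto
  next
    case greater
    then show ?thesis using q1 q2 unfolding lc_pos_def Rep_plus
      by (intro exI[of _ q2]) auto
  qed
qed

instance lc :: linordered_ab_group_add
proof
  fix x y z :: lc
  show "(x < y) = (x \<le> y \<and> \<not> y \<le> x)"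
    unfolding less_eq_lc_def less_lc_def
    by (metis pos_asym pos_not_zero minus_diff_eq diff_self)
  show "x \<le> x" by (simp add: less_eq_lc_def)
  show "x \<le> y \<Longrightarrow> y \<le> z \<Longrightarrow> x \<le> z"
    unfolding less_eq_lc_def less_lc_def
    by (metis pos_add diff_add_cancel add.commute add_diff_eq)
  show "x \<le> y \<Longrightarrow> y \<le> x \<Longrightarrow> x = y"
    unfolding less_eq_lc_def less_lc_def
    by (metis pos_asym minus_diff_eq)
  show "x \<le> y \<Longrightarrow> z + x \<le> z + y"
    unfolding less_eq_lc_def less_lc_def by simp
  show "x \<le> y \<or> y \<le> x"
    unfolding less_eq_lc_def less_lc_def
    by (metis pos_tri minus_diff_eq eq_iff_diff_eq_0)
qed

lemma less_pos: "x < y \<longleftrightarrow> lc_pos (y - x)"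
  by (simp add: less_lc_def)




definition sm :: "rat \<Rightarrow> lc \<Rightarrow> bool" where
  "sm q y \<longleftrightarrow> (\<forall>p\<le>q. Rep_lc y p = 0)"

lemma sm_0[simp]: "sm q 0" by (simp add: sm_def Rep_zero)
lemma sm_add: "sm q x \<Longrightarrow> sm q y \<Longrightarrow> sm q (x + y)" by (simp add: sm_def Rep_plus)
lemma sm_diff: "sm q x \<Longrightarrow> sm q y \<Longrightarrow> sm q (x - y)" by (simp add: sm_def Rep_minus)
lemma sm_uminus[simp]: "sm q (- x) \<longleftrightarrow> sm q x" by (simp add: sm_def Rep_uminus)
lemma sm_mono: "sm q x \<Longrightarrow> q' \<le> q \<Longrightarrow> sm q' x" by (simp add: sm_def)
lemma sm_sum: "(\<And>x. x \<in> A \<Longrightarrow> sm q (f x)) \<Longrightarrow> sm q (sum f A)"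
proof (induction A rule: infinite_finite_induct)
  case (insert x F) then show ?case by (simp add: sm_add)
qed auto

definition lcmono :: "rat \<Rightarrow> lc" where
  "lcmono q = Abs_lc (\<lambda>p. if p = q then 1 else 0)"

lemma Rep_mono: "Rep_lc (lcmono q) = (\<lambda>p. if p = q then 1 else 0)"
  unfolding lcmono_def
proof (rule Abs_lc_inverse, safe)
  fix r
  have "{p. p \<le> r \<and> (if p = q then 1 else 0) \<noteq> (0::real)} \<subseteq> {q}" by auto
  then show "finite {p. p \<le> r \<and> (if p = q then 1 else 0) \<noteq> (0::real)}" using finite_subset by blast
qed

lemma sm_mono_lc: "q < r \<Longrightarrow> sm q (lcmono r)" by (simp add: sm_def Rep_mono)

lemma sm_less_mono: "sm q y \<Longrightarrow> y < lcmono q"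
  unfolding less_pos lc_pos_def
  by (intro exI[of _ q]) (auto simp: sm_def Rep_minus Rep_mono)

lemma mono_pos: "0 < lcmono q" using sm_less_mono[of q 0] by simp

lemma sm_less_pos: assumes "0 < e" shows "\<exists>q. \<forall>y. sm q y \<longrightarrow> y < e"
proof -
  obtain q where q: "0 < Rep_lc e q" "\<forall>p<q. Rep_lc e p = 0"
    using assms unfolding less_pos lc_pos_def by (auto simp: Rep_minus Rep_zero)
  show ?thesis
    by (rule exI[of _ q], intro allI impI, unfold less_pos lc_pos_def, rule exI[of _ q])
       (use q in \<open>auto simp: sm_def Rep_minus\<close>)
qed

lemma mono_below: assumes "0 < e" shows "\<exists>q. lcmono q < e"
proof -
  obtain q where "\<forall>y. sm q y \<longrightarrow> y < e" using sm_less_pos[OF assms] by blast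
  then show ?thesis using sm_mono_lc[of q "q+1"] by auto
qed

lemma approx_le: assumes "\<And>q. x \<le> y + lcmono q" shows "x \<le> (y::lc)"
proof (rule ccontr)
  assume "\<not> x \<le> y"
  then have "0 < x - y" by simp
  then obtain q where "lcmono q < x - y" using mono_below by blast
  then have "y + lcmono q < x" by (simp add: algebra_simps)
  then show False using assms[of q] by simp
qed

lemma two_mono: "lcmono (q+1) + lcmono (q+1) < lcmono q"
  by (rule sm_less_mono, rule sm_add; rule sm_mono_lc; simp)

lemma three_mono: "lcmono (q+1) + lcmono (q+1) + lcmono (q+1) < lcmono q"
  by (rule sm_less_mono, (rule sm_add)+; rule sm_mono_lc; simp)

lemma pos_small:
  assumes "0 \<le> x" "x \<le> z" "sm q z" shows "sm q x"
proof (rule ccontr)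
  assume ns: "\<not> sm q x"
  then obtain p where p: "p \<le> q" "Rep_lc x p \<noteq> 0" by (auto simp: sm_def)
  then have "x \<noteq> 0" by (auto simp: Rep_zero)
  then have "0 < x" using assms by simp
  then obtain q1 where q1: "0 < Rep_lc x q1" "\<forall>p<q1. Rep_lc x p = 0"
    unfolding less_pos lc_pos_def by (auto simp: Rep_minus Rep_zero)
  have "q1 \<le> p" using p q1 by (meson not_le)
  then have "q1 \<le> q" using p by simp
  have "z < x" unfolding less_pos lc_pos_def
    by (rule exI[of _ q1]) (use q1 \<open>q1 \<le> q\<close> assms(3) in \<open>auto simp: Rep_minus sm_def\<close>)
  then show False using assms by simp
qed

lemma bounded_sm:
  assumes "y < lcmono r" "- lcmono r < y" "q < r" shows "sm q y"
proof (rule ccontr)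
  assume "\<not> sm q y"
  then obtain p where p: "p \<le> q" "Rep_lc y p \<noteq> 0" by (auto simp: sm_def)
  then have "y \<noteq> 0" by (auto simp: Rep_zero)
  then obtain p1 where p1: "Rep_lc y p1 \<noteq> 0" "\<forall>p<p1. Rep_lc y p = 0" using lead_ex by blast
  have "p1 \<le> p" using p p1 by (meson not_le)
  then have "p1 < r" using p assms by simp
  show False
  proof (cases "Rep_lc y p1 > 0")
    case True
    have "lcmono r < y" unfolding less_pos lc_pos_def
      by (rule exI[of _ p1]) (use p1 True \<open>p1 < r\<close> in \<open>auto simp: Rep_minus Rep_mono\<close>)
    then show False using assms by simp
  next
    case False
    have "y < - lcmono r" unfolding less_pos lc_pos_def
      by (rule exI[of _ p1]) (use p1 False \<open>p1 < r\<close> in \<open>auto simp: Rep_minus Rep_mono Rep_uminus\<close>)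
    then show False using assms by simp
  qed
qed

lemma tendsto_sm: "lc_tendsto X L \<longleftrightarrow> (\<forall>q. \<exists>N. \<forall>n\<ge>N. sm q (X n - L))"
proof
  assume a: "lc_tendsto X L"
  show "\<forall>q. \<exists>N. \<forall>n\<ge>N. sm q (X n - L)"
  proof
    fix q
    obtain N where "\<forall>n\<ge>N. L - lcmono (q+1) < X n \<and> X n < L + lcmono (q+1)"
      using a mono_pos unfolding lc_tendsto_def by blast
    then have "\<forall>n\<ge>N. sm q (X n - L)"
      by (auto intro!: bounded_sm[of _ "q+1"] simp: algebra_simps)
    then show "\<exists>N. \<forall>n\<ge>N. sm q (X n - L)" by blast
  qed
next
  assume a: "\<forall>q. \<exists>N. \<forall>n\<ge>N. sm q (X n - L)"
  show "lc_tendsto X L" unfolding lc_tendsto_def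
  proof (intro allI impI)
    fix e :: lc assume "0 < e"
    then obtain q where q: "\<forall>y. sm q y \<longrightarrow> y < e" using sm_less_pos by blast
    obtain N where N: "\<forall>n\<ge>N. sm q (X n - L)" using a by blast
    have "\<forall>n\<ge>N. L - e < X n \<and> X n < L + e"
    proof (intro allI impI)
      fix n assume "n \<ge> N"
      then have s1: "sm q (X n - L)" using N by auto
      then have "sm q (L - X n)" using sm_uminus[of q "X n - L"] by (simp only: minus_diff_eq)
      then have "X n - L < e" "L - X n < e" using q s1 by auto
      then show "L - e < X n \<and> X n < L + e" by (auto simp: algebra_simps)
    qed
    then show "\<exists>N. \<forall>n\<ge>N. L - e < X n \<and> X n < L + e" by blast
  qed
qed

lemma tendsto_le:
  assumes "lc_tendsto X L" "\<And>n. n \<ge> N \<Longrightarrow> X n \<le> c" shows "L \<le> c"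
proof (rule ccontr)
  assume "\<not> L \<le> c"
  then have "0 < L - c" by simp
  then obtain N' where "\<forall>n\<ge>N'. L - (L - c) < X n \<and> X n < L + (L - c)"
    using assms(1) unfolding lc_tendsto_def by blast
  then have "c < X (max N N')" by simp
  then show False using assms(2)[of "max N N'"] by simp
qed

lemma tendsto_ge:
  assumes "lc_tendsto X L" "\<And>n. n \<ge> N \<Longrightarrow> c \<le> X n" shows "c \<le> L"
proof (rule ccontr)
  assume "\<not> c \<le> L"
  then have "0 < c - L" by simp
  then obtain N' where "\<forall>n\<ge>N'. L - (c - L) < X n \<and> X n < L + (c - L)"
    using assms(1) unfolding lc_tendsto_def by blast
  then have "X (max N N') < c" by simp
  then show False using assms(2)[of "max N N'"] by simp
qed

lemma tendsto_sm_lim: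
  assumes "lc_tendsto X L" "\<And>n. sm q (X n)" shows "sm q L"
proof -
  obtain N where "\<forall>n\<ge>N. sm q (X n - L)" using assms(1) tendsto_sm by blast
  then have "sm q (X N - (X N - L))" using assms(2) sm_diff by blast
  then show ?thesis by simp
qed

lemma complete:
  assumes "\<forall>q. \<exists>N. \<forall>i\<ge>N. \<forall>j\<ge>N. sm q (X i - X j)"
  shows "\<exists>L. lc_tendsto X L"
proof -
  define N where "N q = (SOME N. \<forall>i\<ge>N. \<forall>j\<ge>N. sm q (X i - X j))" for q
  have N: "\<forall>i\<ge>N q. \<forall>j\<ge>N q. sm q (X i - X j)" for q
    unfolding N_def using someI_ex[OF assms[rule_format, of q]] .
  define f where "f p = Rep_lc (X (N p)) p" for p
  have key: "f p = Rep_lc (X n) p" if "p \<le> q" "n \<ge> N q" for p q n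
  proof -
    let ?M = "max n (N p)"
    have "sm p (X ?M - X (N p))" using N[of p] by simp
    then have 1: "Rep_lc (X ?M) p = Rep_lc (X (N p)) p" by (simp add: sm_def Rep_minus)
    have "sm q (X ?M - X n)" using N[of q] that by simp
    then have 2: "Rep_lc (X ?M) p = Rep_lc (X n) p" using that by (simp add: sm_def Rep_minus)
    show ?thesis using 1 2 f_def by simp
  qed
  have fin: "finite {p. p \<le> q \<and> f p \<noteq> 0}" for q
  proof -
    have "{p. p \<le> q \<and> f p \<noteq> 0} = {p. p \<le> q \<and> Rep_lc (X (N q)) p \<noteq> 0}"
      using key[of _ q "N q"] by auto
    then show ?thesis using lc_fin by simp
  qed
  define L where "L = Abs_lc f"
  have RL: "Rep_lc L = f" unfolding L_def by (rule Abs_lc_inverse) (use fin in auto)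
  have "lc_tendsto X L" unfolding tendsto_sm
  proof
    fix q show "\<exists>M. \<forall>n\<ge>M. sm q (X n - L)"
      by (rule exI[of _ "N q"]) (auto simp: sm_def Rep_minus RL key)
  qed
  then show ?thesis by blast
qed

lemma cauchy_incr:
  assumes "\<And>n. n \<ge> N \<Longrightarrow> sm q (g (Suc n) - g n)" "i \<ge> N" "j \<ge> N"
  shows "sm q (g i - g j)"
proof -
  have a: "sm q (g k - g N)" if "k \<ge> N" for k
    using that
  proof (induction k rule: dec_induct)
    case (step k)
    have "g (Suc k) - g N = (g (Suc k) - g k) + (g k - g N)" by simp
    then show ?case using step assms(1) sm_add by metis
  qed simp
  have "g i - g j = (g i - g N) - (g j - g N)" by simp
  then show ?thesis using a assms sm_diff by metis
qed

lemma psum_sum: "lc_psum f n = sum f {..<n}"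
  by (induction n) (auto simp: add.commute)

lemma sums_ex:
  assumes "\<forall>q. \<exists>N. \<forall>n\<ge>N. sm q (f n)" shows "\<exists>s. lc_sums f s"
  unfolding lc_sums_def
proof (rule complete, intro allI)
  fix q
  obtain N where N: "\<forall>n\<ge>N. sm q (f n)" using assms by blast
  have "\<forall>i\<ge>N. \<forall>j\<ge>N. sm q (lc_psum f i - lc_psum f j)"
  proof (intro allI impI)
    fix i j assume "i \<ge> N" "j \<ge> N"
    show "sm q (lc_psum f i - lc_psum f j)"
      by (rule cauchy_incr[of N]) (use N \<open>i \<ge> N\<close> \<open>j \<ge> N\<close> in auto)
  qed
  then show "\<exists>N. \<forall>i\<ge>N. \<forall>j\<ge>N. sm q (lc_psum f i - lc_psum f j)" by blast
qed

lemma sums_terms: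
  assumes "lc_sums f s" shows "\<forall>q. \<exists>N. \<forall>n\<ge>N. sm q (f n)"
proof
  fix q
  obtain N where N: "\<And>n. n \<ge> N \<Longrightarrow> sm q (lc_psum f n - s)"
    using assms unfolding lc_sums_def tendsto_sm by blast
  have "sm q (f n)" if "n \<ge> N" for n
  proof -
    have "sm q ((lc_psum f (Suc n) - s) - (lc_psum f n - s))"
      by (rule sm_diff; rule N) (use that in auto)
    moreover have "(lc_psum f (Suc n) - s) - (lc_psum f n - s) = f n" by simp
    ultimately show "sm q (f n)" by metis
  qed
  then show "\<exists>N. \<forall>n\<ge>N. sm q (f n)" by blast
qed

lemma psum_le_sums:
  assumes "lc_sums f s" "\<And>n. 0 \<le> f n" shows "lc_psum f n \<le> s"
proof -
  have m: "lc_psum f n \<le> lc_psum f m" if "m \<ge> n" for m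
  proof -
    have "sum f {..<n} \<le> sum f {..<m}"
      by (rule sum_mono2) (use that assms(2) in auto)
    then show ?thesis by (simp only: psum_sum)
  qed
  have t: "lc_tendsto (lc_psum f) s" using assms(1) unfolding lc_sums_def .
  show ?thesis by (rule tendsto_ge[OF t, of n]) (rule m)
qed

lemma sums_nonneg:
  assumes "lc_sums f s" "\<And>n. 0 \<le> f n" shows "0 \<le> s"
  using psum_le_sums[OF assms, of 0] by simp

lemma term_le_sums:
  assumes "lc_sums f s" "\<And>n. 0 \<le> f n" shows "f n \<le> s"
proof -
  have "f n \<le> lc_psum f (Suc n)" unfolding psum_sum
    using sum_mono2[of "{..<Suc n}" "{n}" f] by (auto simp: assms(2))
  then show ?thesis using psum_le_sums[OF assms] order_trans by blast
qed




lemma cover_pos: "lc_cover A a b S \<Longrightarrow> 0 < b n - a n"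
  unfolding lc_cover_def lc_interval_def by auto

lemma cl_nonneg: "s \<in> cover_lengths A \<Longrightarrow> 0 \<le> s"
proof -
  assume "s \<in> cover_lengths A"
  then obtain a b S where c: "lc_cover A a b S" and s: "lc_sums (\<lambda>n. b n - a n) s"
    unfolding cover_lengths_def by blast
  show "0 \<le> s" by (rule sums_nonneg[OF s]) (rule less_imp_le, rule cover_pos[OF c])
qed

lemma cl_anti: "A \<subseteq> B \<Longrightarrow> cover_lengths B \<subseteq> cover_lengths A"
  unfolding cover_lengths_def lc_cover_def by blast

lemma inf_unique: "lc_is_inf T m \<Longrightarrow> lc_is_inf T m' \<Longrightarrow> m = m'"
  unfolding lc_is_inf_def by (meson order.antisym)

lemma om_inf: "outer_measurable A \<Longrightarrow> lc_is_inf (cover_lengths A) (Mu A)"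
  unfolding outer_measurable_def Mu_def by (metis inf_unique theI)

lemma Mu_eq: "lc_is_inf (cover_lengths A) m \<Longrightarrow> Mu A = m"
  unfolding Mu_def by (metis inf_unique the_equality)

lemma Mu_le: "outer_measurable A \<Longrightarrow> s \<in> cover_lengths A \<Longrightarrow> Mu A \<le> s"
  using om_inf unfolding lc_is_inf_def by blast

lemma Mu_approx:
  assumes "outer_measurable A" shows "\<exists>s\<in>cover_lengths A. s < Mu A + lcmono q"
proof (rule ccontr)
  assume "\<not> ?thesis"
  then have "\<forall>s\<in>cover_lengths A. Mu A + lcmono q \<le> s" by (auto simp: not_less)
  then have "Mu A + lcmono q \<le> Mu A" using om_inf[OF assms] unfolding lc_is_inf_def by blast
  then show False using mono_pos[of q] by simp
qed

lemma Mu_nonneg: "outer_measurable A \<Longrightarrow> 0 \<le> Mu A"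
  using om_inf cl_nonneg unfolding lc_is_inf_def by blast

lemma Mu_mono: "outer_measurable A \<Longrightarrow> outer_measurable B \<Longrightarrow> A \<subseteq> B \<Longrightarrow> Mu A \<le> Mu B"
  using om_inf[of A] om_inf[of B] cl_anti[of A B] unfolding lc_is_inf_def by blast

lemma inf_char:
  assumes "\<And>s. s \<in> cover_lengths A \<Longrightarrow> m \<le> s"
    and "\<And>q. \<exists>s\<in>cover_lengths A. s \<le> m + lcmono q"
  shows "outer_measurable A \<and> Mu A = m"
proof -
  have "lc_is_inf (cover_lengths A) m"
    unfolding lc_is_inf_def
  proof (intro conjI allI impI ballI)
    fix s assume "s \<in> cover_lengths A" then show "m \<le> s" by (rule assms(1))
  next
    fix m' assume m': "\<forall>t\<in>cover_lengths A. m' \<le> t"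
    show "m' \<le> m"
    proof (rule approx_le)
      fix q obtain s where "s \<in> cover_lengths A" "s \<le> m + lcmono q" using assms(2) by blast
      then show "m' \<le> m + lcmono q" using m' order_trans by blast
    qed
  qed
  then show ?thesis using Mu_eq unfolding outer_measurable_def by blast
qed

lemma rat_arch: "\<exists>N::nat. (r::rat) < of_nat N"
  using reals_Archimedean2 by blast

lemma empty_cover: "\<exists>s\<in>cover_lengths {}. sm q s"
proof -
  define b where "b n = lcmono (q + 1 + of_nat n)" for n :: nat
  define a where "a n = (0::lc)" for n :: nat
  define S where "S n = {a n..b n}" for n
  have t: "\<forall>r. \<exists>N. \<forall>n\<ge>N. sm r (b n - a n)"
  proof
    fix r
    obtain N :: nat where N: "r - q < of_nat N" using rat_arch by blast
    have "sm r (b n - a n)" if "n \<ge> N" for n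
    proof -
      have "(of_nat N::rat) \<le> of_nat n" using that by simp
      then have "r < q + 1 + of_nat n" using N by linarith
      then show ?thesis unfolding a_def b_def by (simp add: sm_mono_lc)
    qed
    then show "\<exists>N. \<forall>n\<ge>N. sm r (b n - a n)" by blast
  qed
  obtain s where s: "lc_sums (\<lambda>n. b n - a n) s" using sums_ex[OF t] by blast
  have "sm q (lc_psum (\<lambda>n. b n - a n) n)" for n
    unfolding psum_sum by (rule sm_sum) (simp add: a_def b_def sm_mono_lc)
  then have "sm q s" using s unfolding lc_sums_def by (intro tendsto_sm_lim[of _ s]) auto
  moreover have "lc_interval (a n) (b n) (S n)" for n
    unfolding lc_interval_def S_def a_def b_def using mono_pos by simp
  then have "lc_cover {} a b S"
    unfolding lc_cover_def using s by blast
  ultimately show ?thesis unfolding cover_lengths_def using s by blast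
qed

lemma empty_om: "outer_measurable {} \<and> Mu {} = 0"
proof (rule inf_char)
  fix s assume "s \<in> cover_lengths {}" then show "0 \<le> s" by (rule cl_nonneg)
next
  fix q obtain s where s: "s \<in> cover_lengths {}" "sm q s" using empty_cover by blast
  then have "s \<le> 0 + lcmono q" using sm_less_mono[of q s] by simp
  then show "\<exists>s\<in>cover_lengths {}. s \<le> 0 + lcmono q" using s by blast
qed




lemma comb:
  fixes D :: "nat \<Rightarrow> lc set" and a b :: "nat \<Rightarrow> nat \<Rightarrow> lc" and S :: "nat \<Rightarrow> nat \<Rightarrow> lc set"
    and \<sigma> :: "nat \<Rightarrow> lc"
  assumes cov: "\<And>i. lc_cover (D i) (a i) (b i) (S i)"
    and sums: "\<And>i. lc_sums (\<lambda>n. b i n - a i n) (\<sigma> i)"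
    and tends: "\<And>q. \<exists>N. \<forall>i\<ge>N. sm q (\<sigma> i)"
  shows "\<exists>T. T \<in> cover_lengths (\<Union>i. D i) \<and>
           (\<forall>k q. (\<forall>i\<ge>k. sm q (\<sigma> i)) \<longrightarrow> T \<le> (\<Sum>i<k. \<sigma> i) + lcmono q)"
proof -
  define len where "len i n = b i n - a i n" for i n
  have lpos: "0 < len i n" for i n using cover_pos[OF cov] len_def by simp
  have lnn: "0 \<le> len i n" for i n using lpos less_imp_le by blast
  have sums': "lc_sums (len i) (\<sigma> i)" for i using sums[of i] unfolding len_def .
  have lle: "len i n \<le> \<sigma> i" for i n by (rule term_le_sums[OF sums' lnn])
  have lsm: "sm q (len i n)" if "sm q (\<sigma> i)" for q i n
    by (rule pos_small[OF lnn lle that])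
  have lt: "\<forall>q. \<exists>K. \<forall>n\<ge>K. sm q (len i n)" for i by (rule sums_terms[OF sums'])
  define pa where "pa j = a (fst (prod_decode j)) (snd (prod_decode j))" for j :: nat
  define pb where "pb j = b (fst (prod_decode j)) (snd (prod_decode j))" for j :: nat
  define pS where "pS j = S (fst (prod_decode j)) (snd (prod_decode j))" for j :: nat
  define l where "l j = len (fst (prod_decode j)) (snd (prod_decode j))" for j :: nat
  have l_eq: "(\<lambda>j. pb j - pa j) = l" unfolding l_def pa_def pb_def len_def by simp
  have lt0: "\<forall>q. \<exists>N. \<forall>j\<ge>N. sm q (l j)"
  proof
    fix q
    obtain I where I: "\<forall>i\<ge>I. sm q (\<sigma> i)" using tends by blast
    define K where "K i = (SOME K. \<forall>n\<ge>K. sm q (len i n))" for i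
    have K: "\<forall>n\<ge>K i. sm q (len i n)" for i
      unfolding K_def using someI_ex[OF lt[of i, rule_format, of q]] .
    define Bad where "Bad = prod_encode ` (SIGMA i:{..<I}. {..<K i})"
    have "finite Bad" unfolding Bad_def by (intro finite_imageI finite_SigmaI) simp_all
    then obtain N where N: "\<forall>j\<in>Bad. j < N" using finite_nat_set_iff_bounded by blast
    have "sm q (l j)" if "j \<ge> N" for j
    proof -
      obtain i n where ij: "prod_decode j = (i, n)" by (cases "prod_decode j")
      have je: "j = prod_encode (i, n)" using ij by (metis prod_decode_inverse)
      have le: "l j = len i n" unfolding l_def ij by simp
      show ?thesis
      proof (cases "i \<ge> I")
        case True then show ?thesis using I lsm le by simp
      next
        case False
        show ?thesis
        proof (cases "n \<ge> K i")
          case True then show ?thesis using K le by simp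
        next
          case False2: False
          then have "j \<in> Bad" unfolding Bad_def je using False by auto
          then show ?thesis using N that by auto
        qed
      qed
    qed
    then show "\<exists>N. \<forall>j\<ge>N. sm q (l j)" by blast
  qed
  obtain T where T: "lc_sums l T" using sums_ex[OF lt0] by blast
  have cover: "lc_cover (\<Union>i. D i) pa pb pS"
    unfolding lc_cover_def
  proof (intro conjI allI subsetI)
    fix j show "lc_interval (pa j) (pb j) (pS j)"
      using cov[of "fst (prod_decode j)"] unfolding lc_cover_def pa_def pb_def pS_def by blast
  next
    fix x assume "x \<in> (\<Union>i. D i)"
    then obtain i where "x \<in> D i" by blast
    then obtain n where "x \<in> S i n" using cov[of i] unfolding lc_cover_def by blast
    then have "x \<in> pS (prod_encode (i, n))" unfolding pS_def by (simp add: prod_encode_inverse)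
    then show "x \<in> (\<Union>j. pS j)" by blast
  next
    show "\<exists>s. lc_sums (\<lambda>n. pb n - pa n) s" unfolding l_eq using T by blast
  qed
  have Tcl: "T \<in> cover_lengths (\<Union>i. D i)"
  proof -
    have "lc_sums (\<lambda>n. pb n - pa n) T" unfolding l_eq by (rule T)
    then show ?thesis unfolding cover_lengths_def using cover by blast
  qed
  have bound: "T \<le> (\<Sum>i<k. \<sigma> i) + lcmono q" if H: "\<forall>i\<ge>k. sm q (\<sigma> i)" for k q
  proof -
    have "lc_psum l J \<le> (\<Sum>i<k. \<sigma> i) + lcmono q" for J
    proof -
      define g where "g p = len (fst p) (snd p)" for p
      define F where "F = prod_decode ` {..<J}"
      have finF: "finite F" unfolding F_def by simp
      have "lc_psum l J = sum l {..<J}" by (rule psum_sum)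
      also have "\<dots> = sum g F"
      proof -
        have inj: "inj_on prod_decode {..<J}" by (rule inj_prod_decode)
        have "sum g F = sum (g \<circ> prod_decode) {..<J}" unfolding F_def by (rule sum.reindex[OF inj])
        moreover have "g \<circ> prod_decode = l" by (simp add: fun_eq_iff g_def l_def)
        ultimately show ?thesis by simp
      qed
      also have "\<dots> = sum g (F \<inter> {p. fst p < k}) + sum g (F - {p. fst p < k})"
        by (rule sum.Int_Diff[OF finF])
      also have "\<dots> \<le> (\<Sum>i<k. \<sigma> i) + lcmono q"
      proof (rule add_mono)
        obtain Kb where Kb: "\<forall>x\<in>snd ` F. x < Kb"
          using finite_nat_set_iff_bounded finF by blast
        have sub: "F \<inter> {p. fst p < k} \<subseteq> {..<k} \<times> {..<Kb}"
        proof
          fix p assume p: "p \<in> F \<inter> {p. fst p < k}"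
          then have "snd p < Kb" using Kb by blast
          then show "p \<in> {..<k} \<times> {..<Kb}" using p by (cases p) auto
        qed
        have "sum g (F \<inter> {p. fst p < k}) \<le> sum g ({..<k} \<times> {..<Kb})"
          by (rule sum_mono2[OF _ sub]) (auto simp: g_def lnn)
        also have "\<dots> = (\<Sum>i<k. \<Sum>n<Kb. len i n)"
          unfolding g_def by (simp add: sum.cartesian_product case_prod_unfold)
        also have "\<dots> \<le> (\<Sum>i<k. \<sigma> i)"
        proof (rule sum_mono)
          fix i
          have "lc_psum (len i) Kb \<le> \<sigma> i" by (rule psum_le_sums[OF sums' lnn])
          then show "(\<Sum>n<Kb. len i n) \<le> \<sigma> i" by (simp add: psum_sum)
        qed
        finally show "sum g (F \<inter> {p. fst p < k}) \<le> (\<Sum>i<k. \<sigma> i)" .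
      next
        have "sm q (sum g (F - {p. fst p < k}))"
        proof (rule sm_sum)
          fix p assume "p \<in> F - {p. fst p < k}"
          then have "sm q (\<sigma> (fst p))" using H by auto
          then show "sm q (g p)" unfolding g_def by (rule lsm)
        qed
        then show "sum g (F - {p. fst p < k}) \<le> lcmono q"
          using sm_less_mono less_imp_le by blast
      qed
      finally show ?thesis .
    qed
    moreover have "lc_tendsto (lc_psum l) T" using T unfolding lc_sums_def .
    ultimately show ?thesis using tendsto_le[where N=0] by blast
  qed
  show ?thesis using Tcl bound by blast
qed




lemma comb2:
  assumes "s \<in> cover_lengths A1" "t \<in> cover_lengths A2"
  shows "\<exists>T\<in>cover_lengths (A1 \<union> A2). T \<le> s + t + lcmono q"
proof -
  obtain a1 b1 S1 where c1: "lc_cover A1 a1 b1 S1" "lc_sums (\<lambda>n. b1 n - a1 n) s"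
    using assms(1) unfolding cover_lengths_def by blast
  obtain a2 b2 S2 where c2: "lc_cover A2 a2 b2 S2" "lc_sums (\<lambda>n. b2 n - a2 n) t"
    using assms(2) unfolding cover_lengths_def by blast
  have "\<forall>i::nat. \<exists>a b S \<sigma>. lc_cover {} a b S \<and> lc_sums (\<lambda>n. b n - a n) \<sigma> \<and> sm (q + of_nat i) \<sigma>"
  proof
    fix i :: nat
    obtain \<sigma> where "\<sigma> \<in> cover_lengths {}" "sm (q + of_nat i) \<sigma>" using empty_cover by blast
    then show "\<exists>a b S \<sigma>. lc_cover {} a b S \<and> lc_sums (\<lambda>n. b n - a n) \<sigma> \<and> sm (q + of_nat i) \<sigma>"
      unfolding cover_lengths_def by blast
  qed
  then obtain ae be Se \<sigma>e where e: "\<And>i::nat. lc_cover {} (ae i) (be i) (Se i)"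
    "\<And>i. lc_sums (\<lambda>n. be i n - ae i n) (\<sigma>e i)" "\<And>i. sm (q + of_nat i) (\<sigma>e i)"
    by metis
  define D where "D i = (if i = 0 then A1 else if i = 1 then A2 else {})" for i :: nat
  define a where "a i = (if i = 0 then a1 else if i = 1 then a2 else ae i)" for i :: nat
  define b where "b i = (if i = 0 then b1 else if i = 1 then b2 else be i)" for i :: nat
  define S where "S i = (if i = 0 then S1 else if i = 1 then S2 else Se i)" for i :: nat
  define \<sigma> where "\<sigma> i = (if i = 0 then s else if i = 1 then t else \<sigma>e i)" for i :: nat
  have cov: "lc_cover (D i) (a i) (b i) (S i)" for i
    unfolding D_def a_def b_def S_def using c1 c2 e by simp
  have sums: "lc_sums (\<lambda>n. b i n - a i n) (\<sigma> i)" for i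
    unfolding \<sigma>_def a_def b_def using c1 c2 e by simp
  have small: "sm r (\<sigma> i)" if "i \<ge> 2" "r \<le> q + of_nat i" for r i
  proof -
    have "\<sigma> i = \<sigma>e i" unfolding \<sigma>_def using that by simp
    then show ?thesis using e(3)[of i] sm_mono that(2) by simp
  qed
  have tends: "\<exists>N. \<forall>i\<ge>N. sm r (\<sigma> i)" for r
  proof -
    obtain N :: nat where N: "r - q < of_nat N" using rat_arch by blast
    have "sm r (\<sigma> i)" if "i \<ge> N + 2" for i
    proof (rule small)
      show "2 \<le> i" using that by simp
      have "(of_nat N :: rat) \<le> of_nat i" using that by simp
      then show "r \<le> q + of_nat i" using N by linarith
    qed
    then show ?thesis by blast
  qed
  obtain T where T: "T \<in> cover_lengths (\<Union>i. D i)"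
    "\<And>k r. (\<forall>i\<ge>k. sm r (\<sigma> i)) \<Longrightarrow> T \<le> (\<Sum>i<k. \<sigma> i) + lcmono r"
    using comb[OF cov sums tends] by blast
  have "T \<le> (\<Sum>i<2. \<sigma> i) + lcmono q"
    by (rule T(2)) (auto intro: small)
  moreover have "(\<Sum>i<2. \<sigma> i) = s + t" by (simp add: \<sigma>_def numeral_2_eq_2)
  moreover have "(\<Union>i. D i) = A1 \<union> A2"
  proof
    show "(\<Union>i. D i) \<subseteq> A1 \<union> A2" unfolding D_def by auto
    have "D 0 = A1" "D 1 = A2" unfolding D_def by auto
    then show "A1 \<union> A2 \<subseteq> (\<Union>i. D i)" by blast
  qed
  ultimately show ?thesis using T(1) by auto
qed

lemma comb':
  fixes D :: "nat \<Rightarrow> lc set" and \<sigma> :: "nat \<Rightarrow> lc"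
  assumes cl: "\<And>i. \<sigma> i \<in> cover_lengths (D i)"
    and tends: "\<And>q. \<exists>N. \<forall>i\<ge>N. sm q (\<sigma> i)"
  shows "\<exists>T. T \<in> cover_lengths (\<Union>i. D i) \<and>
           (\<forall>k q. (\<forall>i\<ge>k. sm q (\<sigma> i)) \<longrightarrow> T \<le> (\<Sum>i<k. \<sigma> i) + lcmono q)"
proof -
  have "\<forall>i. \<exists>w. lc_cover (D i) (fst w) (fst (snd w)) (snd (snd w)) \<and>
                lc_sums (\<lambda>n. fst (snd w) n - fst w n) (\<sigma> i)"
  proof
    fix i
    obtain a b S where "lc_cover (D i) a b S" "lc_sums (\<lambda>n. b n - a n) (\<sigma> i)"
      using cl[of i] unfolding cover_lengths_def by blast
    then show "\<exists>w. lc_cover (D i) (fst w) (fst (snd w)) (snd (snd w)) \<and>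
                lc_sums (\<lambda>n. fst (snd w) n - fst w n) (\<sigma> i)"
      by (intro exI[of _ "(a, b, S)"]) simp
  qed
  then have "\<exists>f. \<forall>i. lc_cover (D i) (fst (f i)) (fst (snd (f i))) (snd (snd (f i))) \<and>
                lc_sums (\<lambda>n. fst (snd (f i)) n - fst (f i) n) (\<sigma> i)"
    by (rule choice)
  then obtain f where f: "\<And>i. lc_cover (D i) (fst (f i)) (fst (snd (f i))) (snd (snd (f i)))"
     "\<And>i. lc_sums (\<lambda>n. fst (snd (f i)) n - fst (f i) n) (\<sigma> i)" by blast
  show ?thesis by (rule comb[OF f tends])
qed

definition lmeas :: "lc set \<Rightarrow> bool" where
  "lmeas A \<longleftrightarrow> (\<forall>B. outer_measurable B \<longrightarrow>
        outer_measurable (A \<inter> B) \<and> outer_measurable (- A \<inter> B) \<and>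
        Mu B = Mu (A \<inter> B) + Mu (- A \<inter> B))"

lemma L_lmeas: "L_measurable A \<Longrightarrow> lmeas A"
  unfolding L_measurable_def lmeas_def by blast

lemma lmeas_empty: "lmeas {}"
  unfolding lmeas_def using empty_om by simp

lemma lmeas_union:
  assumes A1: "lmeas A1" and A2: "lmeas A2"
  shows "lmeas (A1 \<union> A2)"
  unfolding lmeas_def
proof (intro allI impI)
  fix B assume B: "outer_measurable B"
  define B1 where "B1 = A1 \<inter> B"
  define B2 where "B2 = - A1 \<inter> B"
  define B21 where "B21 = A2 \<inter> B2"
  define B22 where "B22 = - A2 \<inter> B2"
  have o1: "outer_measurable B1" "outer_measurable B2" and e1: "Mu B = Mu B1 + Mu B2"
    using A1 B unfolding lmeas_def B1_def B2_def by blast+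
  have o2: "outer_measurable B21" "outer_measurable B22" and e2: "Mu B2 = Mu B21 + Mu B22"
    using A2 o1(2) unfolding lmeas_def B21_def B22_def by blast+
  have eqC: "(A1 \<union> A2) \<inter> B = B1 \<union> B21" unfolding B1_def B21_def B2_def by auto
  have eqD: "- (A1 \<union> A2) \<inter> B = B22" unfolding B22_def B2_def by auto
  have eqB: "B = (B1 \<union> B21) \<union> B22" unfolding B1_def B21_def B22_def B2_def by auto
  define m where "m = Mu B1 + Mu B21"
  have C: "outer_measurable (B1 \<union> B21) \<and> Mu (B1 \<union> B21) = m"
  proof (rule inf_char)
    fix s assume s: "s \<in> cover_lengths (B1 \<union> B21)"
    show "m \<le> s"
    proof (rule approx_le)
      fix q
      obtain t where t: "t \<in> cover_lengths B22" "t < Mu B22 + lcmono (q+1)"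
        using Mu_approx[OF o2(2)] by blast
      obtain T where T: "T \<in> cover_lengths B" "T \<le> s + t + lcmono (q+1)"
        using comb2[OF s t(1), of "q+1"] eqB by auto
      have "Mu B \<le> T" using Mu_le[OF B T(1)] .
      then have "m + Mu B22 \<le> s + t + lcmono (q+1)" using T(2) e1 e2 unfolding m_def
        by (simp add: add.assoc)
      also have "\<dots> \<le> s + (Mu B22 + lcmono (q+1)) + lcmono (q+1)" using t(2) by simp
      finally have "m \<le> s + (lcmono (q+1) + lcmono (q+1))" by (simp add: algebra_simps)
      also have "\<dots> \<le> s + lcmono q" using two_mono[of q] by simp
      finally show "m \<le> s + lcmono q" .
    qed
  next
    fix q
    obtain s1 where s1: "s1 \<in> cover_lengths B1" "s1 < Mu B1 + lcmono (q+1)"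
      using Mu_approx[OF o1(1)] by blast
    obtain s2 where s2: "s2 \<in> cover_lengths B21" "s2 < Mu B21 + lcmono (q+1)"
      using Mu_approx[OF o2(1)] by blast
    obtain T where T: "T \<in> cover_lengths (B1 \<union> B21)" "T \<le> s1 + s2 + lcmono (q+1)"
      using comb2[OF s1(1) s2(1)] by blast
    have "T \<le> (Mu B1 + lcmono (q+1)) + (Mu B21 + lcmono (q+1)) + lcmono (q+1)"
      using T(2) s1(2) s2(2) by (meson add_mono less_imp_le order_trans order_refl)
    also have "\<dots> = m + (lcmono (q+1) + lcmono (q+1) + lcmono (q+1))" unfolding m_def
      by (simp add: algebra_simps)
    also have "\<dots> \<le> m + lcmono q" using three_mono[of q] by simp
    finally show "\<exists>s\<in>cover_lengths (B1 \<union> B21). s \<le> m + lcmono q" using T(1) by blast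
  qed
  show "outer_measurable ((A1 \<union> A2) \<inter> B) \<and> outer_measurable (- (A1 \<union> A2) \<inter> B) \<and>
        Mu B = Mu ((A1 \<union> A2) \<inter> B) + Mu (- (A1 \<union> A2) \<inter> B)"
    unfolding eqC eqD using C o2(2) e1 e2 unfolding m_def by (simp add: add.assoc)
qed




theorem lemma4p1:
  fixes A :: "nat \<Rightarrow> lc set" and X :: "lc set"
  assumes "\<forall>n\<ge>1. L_measurable (A n)"
    and "lc_tendsto (\<lambda>n. M (A (n + 1))) 0"
    and "outer_measurable X"
  shows "outer_measurable (X \<inter> (\<Union>n\<in>{1..}. A n))
    \<and> (\<forall>N. outer_measurable (X \<inter> (\<Union>n\<in>{1..N}. A n)))
    \<and> (\<exists>L. lc_tendsto (\<lambda>N. Mu (X \<inter> (\<Union>n\<in>{1..N}. A n))) L)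
    \<and> lc_tendsto (\<lambda>N. Mu (X \<inter> (\<Union>n\<in>{1..N}. A n))) (Mu (X \<inter> (\<Union>n\<in>{1..}. A n)))"
proof -
  note LA = assms(1) and X = assms(3)
  have omA: "outer_measurable (A n)" if "n \<ge> 1" for n
    using LA that unfolding L_measurable_def by blast
  have MA: "\<exists>N. \<forall>n\<ge>N. sm q (Mu (A (n + 1)))" for q
    using assms(2) unfolding tendsto_sm M_def by simp
  define U where "U N = (\<Union>n\<in>{1..N}. A n)" for N
  have Usuc: "U (Suc N) = U N \<union> A (Suc N)" for N
  proof -
    have "{1..Suc N} = {1..N} \<union> {Suc N}" by auto
    then show ?thesis unfolding U_def by auto
  qed
  have lmU: "lmeas (U N)" for N
  proof (induction N)
    case 0 then show ?case unfolding U_def using lmeas_empty by simp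
  next
    case (Suc N)
    show ?case unfolding Usuc using lmeas_union[OF Suc L_lmeas] LA by simp
  qed
  define C where "C N = X \<inter> U N" for N
  have oC: "outer_measurable (C N)" for N
    using lmU[of N] X unfolding lmeas_def C_def by (simp add: Int_commute)
  define m where "m N = Mu (C N)" for N
  define \<delta> where "\<delta> N = Mu (- U N \<inter> C (Suc N))" for N
  have incr: "m (Suc N) = m N + \<delta> N" for N
  proof -
    have "Mu (C (Suc N)) = Mu (U N \<inter> C (Suc N)) + \<delta> N"
      using lmU[of N] oC[of "Suc N"] unfolding lmeas_def \<delta>_def by blast
    moreover have "U N \<inter> C (Suc N) = C N" unfolding C_def Usuc by auto
    ultimately show ?thesis unfolding m_def by simp
  qed
  have dnn: "0 \<le> \<delta> N" and dle: "\<delta> N \<le> Mu (A (N + 1))" for N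
  proof -
    have o: "outer_measurable (- U N \<inter> C (Suc N))"
      using lmU[of N] oC[of "Suc N"] unfolding lmeas_def by blast
    then show "0 \<le> \<delta> N" unfolding \<delta>_def by (rule Mu_nonneg)
    have "- U N \<inter> C (Suc N) \<subseteq> A (N + 1)" unfolding C_def Usuc by auto
    then show "\<delta> N \<le> Mu (A (N + 1))" unfolding \<delta>_def using Mu_mono[OF o omA] by simp
  qed
  have cauchy: "\<forall>q. \<exists>N. \<forall>i\<ge>N. \<forall>j\<ge>N. sm q (m i - m j)"
  proof
    fix q
    obtain N where N: "\<forall>n\<ge>N. sm q (Mu (A (n + 1)))" using MA by blast
    have "sm q (m i - m j)" if "i \<ge> N" "j \<ge> N" for i j
    proof (rule cauchy_incr[of N])
      fix n assume "n \<ge> N"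
      then have "sm q (\<delta> n)" using pos_small[OF dnn dle] N by blast
      then show "sm q (m (Suc n) - m n)" using incr by simp
    qed (use that in auto)
    then show "\<exists>N. \<forall>i\<ge>N. \<forall>j\<ge>N. sm q (m i - m j)" by blast
  qed
  obtain L where L: "lc_tendsto m L" using complete[OF cauchy] by blast
  have mmono: "m n \<le> m k" if "n \<le> k" for n k
    using that
  proof (induction k rule: dec_induct)
    case (step k) then show ?case using incr[of k] dnn[of k] by (simp add: add_increasing2)
  qed simp
  have mL: "m N \<le> L" for N
    by (rule tendsto_ge[OF L, of N]) (rule mmono)
  define Cinf where "Cinf = X \<inter> (\<Union>n\<in>{1..}. A n)"
  have CN_sub: "C N \<subseteq> Cinf" for N unfolding C_def Cinf_def U_def by auto
  have main: "outer_measurable Cinf \<and> Mu Cinf = L"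
  proof (rule inf_char)
    fix s assume s: "s \<in> cover_lengths Cinf"
    have "m N \<le> s" for N
      unfolding m_def using Mu_le[OF oC] cl_anti[OF CN_sub] s by blast
    then show "L \<le> s" by (intro tendsto_le[OF L, of 0])
  next
    fix q
    define q' :: rat where "q' = q + 1"
    obtain N where N: "\<forall>n\<ge>N. sm q' (Mu (A (n + 1)))" using MA by blast
    obtain s0 where s0: "s0 \<in> cover_lengths (C N)" "s0 < m N + lcmono q'"
      using Mu_approx[OF oC] unfolding m_def by blast
    have "\<forall>j::nat. \<exists>\<sigma>. \<sigma> \<in> cover_lengths (A (N + Suc j))
             \<and> \<sigma> < Mu (A (N + Suc j)) + lcmono (q' + 1 + of_nat (Suc j))"
    proof
      fix j :: nat
      show "\<exists>\<sigma>. \<sigma> \<in> cover_lengths (A (N + Suc j))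
             \<and> \<sigma> < Mu (A (N + Suc j)) + lcmono (q' + 1 + of_nat (Suc j))"
        using Mu_approx[OF omA[of "N + Suc j"], of "q' + 1 + of_nat (Suc j)"] by auto
    qed
    then have "\<exists>f. \<forall>j::nat. f j \<in> cover_lengths (A (N + Suc j))
             \<and> f j < Mu (A (N + Suc j)) + lcmono (q' + 1 + of_nat (Suc j))" by (rule choice)
    then obtain \<sigma>e0 where e0: "\<And>j. \<sigma>e0 j \<in> cover_lengths (A (N + Suc j))"
      "\<And>j. \<sigma>e0 j < Mu (A (N + Suc j)) + lcmono (q' + 1 + of_nat (Suc j))" by blast
    define \<sigma>e where "\<sigma>e i = \<sigma>e0 (i - 1)" for i
    have e: "\<sigma>e i \<in> cover_lengths (A (N + i))" "\<sigma>e i < Mu (A (N + i)) + lcmono (q' + 1 + of_nat i)"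
      if i1: "i \<ge> 1" for i
    proof -
      obtain j where ij: "i = Suc j" using i1 by (cases i) auto
      show "\<sigma>e i \<in> cover_lengths (A (N + i))" using e0(1)[of j] unfolding \<sigma>e_def ij by simp
      show "\<sigma>e i < Mu (A (N + i)) + lcmono (q' + 1 + of_nat i)" using e0(2)[of j] unfolding \<sigma>e_def ij by simp
    qed
    define D where "D i = (if i = 0 then C N else A (N + i))" for i :: nat
    define \<sigma> where "\<sigma> i = (if i = 0 then s0 else \<sigma>e i)" for i :: nat
    have cl: "\<sigma> i \<in> cover_lengths (D i)" for i
      unfolding D_def \<sigma>_def using s0(1) e(1) by simp
    have snn: "0 \<le> \<sigma> i" for i using cl[of i] by (rule cl_nonneg)
    have smi: "sm r (\<sigma> i)" if "i \<ge> 1" "sm r (Mu (A (N + i)))" "r < q' + 1 + of_nat i" for r i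
    proof (rule pos_small[OF snn])
      show "\<sigma> i \<le> Mu (A (N + i)) + lcmono (q' + 1 + of_nat i)"
        using e(2)[OF that(1)] unfolding \<sigma>_def using that(1) by simp
      show "sm r (Mu (A (N + i)) + lcmono (q' + 1 + of_nat i))"
        using that by (intro sm_add sm_mono_lc)
    qed
    have tends: "\<exists>N'. \<forall>i\<ge>N'. sm r (\<sigma> i)" for r
    proof -
      obtain N1 where N1: "\<forall>n\<ge>N1. sm r (Mu (A (n + 1)))" using MA by blast
      obtain N2 :: nat where N2: "r - q' < of_nat N2" using rat_arch by blast
      have "sm r (\<sigma> i)" if "i \<ge> N1 + N2 + 1" for i
      proof (rule smi)
        show "1 \<le> i" using that by simp
        show "sm r (Mu (A (N + i)))" using N1[rule_format, of "N + i - 1"] that by simp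
        have "(of_nat N2 :: rat) \<le> of_nat i" using that by simp
        then show "r < q' + 1 + of_nat i" using N2 by linarith
      qed
      then show ?thesis by blast
    qed
    obtain T where T: "T \<in> cover_lengths (\<Union>i. D i)"
      "\<And>k r. (\<forall>i\<ge>k. sm r (\<sigma> i)) \<Longrightarrow> T \<le> (\<Sum>i<k. \<sigma> i) + lcmono r"
      using comb'[OF cl tends] by blast
    have "\<forall>i\<ge>1. sm q' (\<sigma> i)"
    proof (intro allI impI)
      fix i :: nat assume i: "i \<ge> 1"
      show "sm q' (\<sigma> i)"
      proof (rule smi[OF i])
        show "sm q' (Mu (A (N + i)))" using N[rule_format, of "N + i - 1"] i by simp
        show "q' < q' + 1 + of_nat i" by simp
      qed
    qed
    then have "T \<le> (\<Sum>i<1. \<sigma> i) + lcmono q'" by (rule T(2))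
    then have "T \<le> s0 + lcmono q'" by (simp add: \<sigma>_def)
    also have "\<dots> \<le> m N + lcmono q' + lcmono q'" using s0(2) by simp
    also have "\<dots> \<le> L + (lcmono q' + lcmono q')" using mL[of N] by (simp add: add.assoc)
    also have "\<dots> \<le> L + lcmono q" using two_mono[of q] unfolding q'_def by simp
    finally have "T \<le> L + lcmono q" .
    moreover have "Cinf \<subseteq> (\<Union>i. D i)"
    proof
      fix x assume "x \<in> Cinf"
      then obtain n where n: "x \<in> X" "n \<ge> 1" "x \<in> A n" unfolding Cinf_def by auto
      show "x \<in> (\<Union>i. D i)"
      proof (cases "n \<le> N")
        case True
        then have "x \<in> D 0" unfolding D_def C_def U_def using n by auto
        then show ?thesis by blast
      next
        case False
        then have "x \<in> D (n - N)" unfolding D_def using n by auto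
        then show ?thesis by blast
      qed
    qed
    ultimately show "\<exists>s\<in>cover_lengths Cinf. s \<le> L + lcmono q"
      using T(1) cl_anti by blast
  qed
  have "lc_tendsto (\<lambda>N. Mu (X \<inter> (\<Union>n\<in>{1..N}. A n))) L"
    using L unfolding m_def C_def U_def .
  then show ?thesis using main oC unfolding Cinf_def C_def U_def by auto
qed


end
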